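(* Let $\mathcal C\subseteq 2^{[n]}$ and let $n$ be a $k$-piercing of $\mathcal C$ with associated interval $[\sigma,\tau]$. Then $$\mathrm{CF}(J_\mathcal C)=\mathrm{CF}(J_{\mathcal C\setminus n})\sqcup\{x_nx_i: i\in[n-1]\setminus\tau\}\sqcup\{x_n(1-x_j): j\in\sigma\}.$$
   Context: A code is a set $\mathcal C\subseteq 2^{[n]}$, $[n]=\{1,\dots,n\}$. Standing conventions: $\emptyset\in\mathcal C$; every neuron lies in some codeword; no two distinct neurons lie in exactly the same codewords. $\mathcal C\setminus n$ is the code on $[n-1]$ obtained by removing $n$ from every codeword. For $\sigma\subseteq\tau$, $[\sigma,\tau]=\{\gamma:\sigma\subseteq\gamma\subseteq\tau\}$, of rank $|\tau\setminus\sigma|$. The neuron $n$ is a $k$-piercing of $\mathcal C$ with associated interval $[\sigma,\tau]$ if $\sigma\subseteq\tau\subseteq[n-1]$, $[\sigma,\tau]$ has rank $k$, $[\sigma,\tau]\subseteq\mathcal C\setminus n$, and $\mathcal C=(\mathcal C\setminus n)\cup[\sigma\cup\{n\},\tau\cup\{n\}]$. A pseudo-monomial is $\prod_{i\in\alpha}x_i\prod_{j\in\beta}(1-x_j)$ with $\alpha\cap\beta=\emptyset$, ordered by divisibility. For a code $\mathcal D$ on $[m]$, $J_\mathcal D=\langle\rho_\gamma:\gamma\notin\mathcal D\rangle\subseteq\mathbb F_2[x_1,\dots,x_m]$ with $\rho_\gamma=\prod_{i\in\gamma}x_i\prod_{j\in[m]\setminus\gamma}(1-x_j)$, and $\mathrm{CF}(J_\mathcal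 D)$ is the set of minimal pseudo-monomials in $J_\mathcal D$. *)

theory Defs
  imports "HOL-Library.Poly_Mapping" "HOL-Library.Z2"
begin

text \<open>Polynomials over F2 in variables x_i (i a natural number) are represented by
  poly_mappings from monomials (nat =>0 nat, exponent vectors) to coefficients in
  the two-element field bit. F2[x_1,...,x_m] is the subring of polynomials
  whose variables lie in {1..m}.\<close>

type_synonym poly2 = "(nat \<Rightarrow>\<^sub>0 nat) \<Rightarrow>\<^sub>0 bit"

definition X :: "nat \<Rightarrow> poly2" where
  "X i = Poly_Mapping.single (Poly_Mapping.single i 1) 1"

definition vars :: "poly2 \<Rightarrow> nat set" where
  "vars p = \<Union> (Poly_Mapping.keys ` Poly_Mapping.keys p)"

definition in_ring :: "nat \<Rightarrow> poly2 \<Rightarrow> bool" where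
  "in_ring m p \<longleftrightarrow> vars p \<subseteq> {1..m}"

definition pm :: "nat set \<Rightarrow> nat set \<Rightarrow> poly2" where
  "pm \<alpha> \<beta> = (\<Prod>i\<in>\<alpha>. X i) * (\<Prod>j\<in>\<beta>. (1 - X j))"

definition is_pseudo_monomial :: "nat \<Rightarrow> poly2 \<Rightarrow> bool" where
  "is_pseudo_monomial m f \<longleftrightarrow>
     (\<exists>\<alpha> \<beta>. \<alpha> \<subseteq> {1..m} \<and> \<beta> \<subseteq> {1..m} \<and> \<alpha> \<inter> \<beta> = {} \<and> f = pm \<alpha> \<beta>)"

definition dvd_in :: "nat \<Rightarrow> poly2 \<Rightarrow> poly2 \<Rightarrow> bool" where
  "dvd_in m g f \<longleftrightarrow> (\<exists>q. in_ring m q \<and> f = g * q)"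

definition rho :: "nat \<Rightarrow> nat set \<Rightarrow> poly2" where
  "rho m \<gamma> = pm \<gamma> ({1..m} - \<gamma>)"

definition ideal_gen :: "nat \<Rightarrow> poly2 set \<Rightarrow> poly2 set" where
  "ideal_gen m G = {(\<Sum>g\<in>G. q g * g) | q. \<forall>g\<in>G. in_ring m (q g)}"

definition J :: "nat \<Rightarrow> nat set set \<Rightarrow> poly2 set" where
  "J m D = ideal_gen m (rho m ` {\<gamma>. \<gamma> \<subseteq> {1..m} \<and> \<gamma> \<notin> D})"

definition CF :: "nat \<Rightarrow> nat set set \<Rightarrow> poly2 set" where
  "CF m D = {f. is_pseudo_monomial m f \<and> f \<in> J m D \<and>
     \<not> (\<exists>g. is_pseudo_monomial m g \<and> g \<in> J m D \<and> dvd_in m g f \<and> g \<noteq> f)}"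

definition is_code :: "nat \<Rightarrow> nat set set \<Rightarrow> bool" where
  "is_code n C \<longleftrightarrow> C \<subseteq> Pow {1..n} \<and> {} \<in> C \<and>
     (\<forall>i\<in>{1..n}. \<exists>c\<in>C. i \<in> c) \<and>
     (\<forall>i\<in>{1..n}. \<forall>j\<in>{1..n}. i \<noteq> j \<longrightarrow> {c\<in>C. i \<in> c} \<noteq> {c\<in>C. j \<in> c})"

definition del_neuron :: "nat set set \<Rightarrow> nat \<Rightarrow> nat set set" where
  "del_neuron C n = (\<lambda>c. c - {n}) ` C"

definition interval :: "nat set \<Rightarrow> nat set \<Rightarrow> nat set set" where
  "interval \<sigma> \<tau> = {\<gamma>. \<sigma> \<subseteq> \<gamma> \<and> \<gamma> \<subseteq> \<tau>}"

definition is_piercing :: "nat set set \<Rightarrow> nat \<Rightarrow> nat \<Rightarrow> nat set \<Rightarrow> nat set \<Rightarrow> bool" where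
  "is_piercing C n k \<sigma> \<tau> \<longleftrightarrow>
     \<sigma> \<subseteq> \<tau> \<and> \<tau> \<subseteq> {1..n-1} \<and> card (\<tau> - \<sigma>) = k \<and>
     interval \<sigma> \<tau> \<subseteq> del_neuron C n \<and>
     C = del_neuron C n \<union> (\<lambda>\<gamma>. insert n \<gamma>) ` interval \<sigma> \<tau>"

end

theory Submission
  imports Defs
begin


definition ev :: "nat set \<Rightarrow> poly2 \<Rightarrow> bit" where
  "ev c p = (\<Sum>k\<in>Poly_Mapping.keys p. if Poly_Mapping.keys k \<subseteq> c then Poly_Mapping.lookup p k else 0)"

lemma ev_add: "ev c (p + q) = ev c p + ev c q"
  unfolding ev_def
  by (rule setsum_keys_plus_distrib[where f="\<lambda>k v. if Poly_Mapping.keys k \<subseteq> c then v else 0"]) auto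

lemma ev_zero[simp]: "ev c 0 = 0"
  by (simp add: ev_def)

lemma ev_single: "ev c (Poly_Mapping.single k a) = (if Poly_Mapping.keys k \<subseteq> c then a else 0)"
  by (cases "a = 0") (auto simp: ev_def)

lemma ev_diff: "ev c (p - q) = ev c p - ev c q"
proof -
  have "ev c p = ev c (p - q) + ev c q" by (metis ev_add diff_add_cancel)
  then show ?thesis by (metis eq_diff_eq)
qed

lemma ev_sum: "ev c (sum f A) = (\<Sum>x\<in>A. ev c (f x))"
  by (induction A rule: infinite_finite_induct) (auto simp: ev_add)

lemma pm_repr: "(p::poly2) = (\<Sum>k\<in>Poly_Mapping.keys p. Poly_Mapping.single k (Poly_Mapping.lookup p k))"
proof (rule poly_mapping_eqI)
  fix k'
  have "(\<Sum>k\<in>Poly_Mapping.keys p. Poly_Mapping.lookup (Poly_Mapping.single k (Poly_Mapping.lookup p k)) k')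
      = (\<Sum>k\<in>Poly_Mapping.keys p. if k = k' then Poly_Mapping.lookup p k else 0)"
    by (rule sum.cong) (auto simp: lookup_single when_def)
  also have "\<dots> = Poly_Mapping.lookup p k'"
    by (auto simp: in_keys_iff)
  finally show "Poly_Mapping.lookup p k' = Poly_Mapping.lookup (\<Sum>k\<in>Poly_Mapping.keys p. Poly_Mapping.single k (Poly_Mapping.lookup p k)) k'"
    by (simp add: lookup_sum)
qed

lemma keys_add_nat: "Poly_Mapping.keys ((k::nat \<Rightarrow>\<^sub>0 nat) + l) = Poly_Mapping.keys k \<union> Poly_Mapping.keys l"
  by (auto simp: in_keys_iff lookup_add)

lemma ev_mult: "ev c (p * q) = ev c p * ev c q"
proof -
  let ?K = "Poly_Mapping.keys p" and ?L = "Poly_Mapping.keys q"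
  let ?a = "Poly_Mapping.lookup p" and ?b = "Poly_Mapping.lookup q"
  have "p * q = (\<Sum>k\<in>?K. Poly_Mapping.single k (?a k)) * (\<Sum>l\<in>?L. Poly_Mapping.single l (?b l))"
    using pm_repr[of p] pm_repr[of q] by simp
  also have "\<dots> = (\<Sum>k\<in>?K. \<Sum>l\<in>?L. Poly_Mapping.single (k + l) (?a k * ?b l))"
    by (simp add: sum_product mult_single)
  finally have "ev c (p * q) = (\<Sum>k\<in>?K. \<Sum>l\<in>?L. ev c (Poly_Mapping.single (k + l) (?a k * ?b l)))"
    by (simp add: ev_sum)
  also have "\<dots> = (\<Sum>k\<in>?K. \<Sum>l\<in>?L. (if Poly_Mapping.keys k \<subseteq> c then ?a k else 0) * (if Poly_Mapping.keys l \<subseteq> c then ?b l else 0))"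
    by (intro sum.cong refl) (simp only: ev_single keys_add_nat Un_subset_iff mult_zero_left mult_zero_right if_if_eq_conj split: if_split; blast)
  also have "\<dots> = ev c p * ev c q"
    by (simp only: ev_def sum_product)
  finally show ?thesis .
qed

lemma ev_one[simp]: "ev c 1 = 1"
  by (simp add: ev_def lookup_one)

lemma ev_prod: "ev c (prod f A) = (\<Prod>x\<in>A. ev c (f x))"
  by (induction A rule: infinite_finite_induct) (auto simp: ev_mult)

lemma ev_X: "ev c (X i) = (if i \<in> c then 1 else 0)"
  by (simp add: X_def ev_single)

lemma prod_ind1: "finite A \<Longrightarrow> (\<Prod>i\<in>A. (if i \<in> c then 1 else 0 :: bit)) = (if A \<subseteq> c then 1 else 0)"
  by (induction A rule: finite_induct) auto

lemma prod_ind2: "finite A \<Longrightarrow> (\<Prod>i\<in>A. 1 - (if i \<in> c then 1 else 0 :: bit)) = (if A \<inter> c = {} then 1 else 0)"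
  by (induction A rule: finite_induct) auto

lemma ev_pm: "finite \<alpha> \<Longrightarrow> finite \<beta> \<Longrightarrow> ev c (pm \<alpha> \<beta>) = (if \<alpha> \<subseteq> c \<and> \<beta> \<inter> c = {} then 1 else 0)"
  by (simp add: pm_def ev_mult ev_prod ev_diff ev_X prod_ind1 prod_ind2; blast)



lemma ev_pm1: "finite a \<Longrightarrow> finite b \<Longrightarrow> ev c (pm a b) = 1 \<longleftrightarrow> a \<subseteq> c \<and> b \<inter> c = {}"
  by (simp add: ev_pm)

lemma pm_inj:
  assumes "finite a" "finite b" "finite a'" "finite b'" "a \<inter> b = {}" "a' \<inter> b' = {}"
    and "pm a b = pm a' b'"
  shows "a = a' \<and> b = b'"
proof -
  have e: "ev c (pm a b) = ev c (pm a' b')" for c using assms(7) by simp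
  have "ev a (pm a b) = 1" using assms(1-6) by (simp add: ev_pm1 Int_commute)
  then have 1: "a' \<subseteq> a" using e[of a] assms(1-6) by (simp add: ev_pm1)
  have "ev a' (pm a' b') = 1" using assms(1-6) by (simp add: ev_pm1 Int_commute)
  then have 2: "a \<subseteq> a'" using e[of a', symmetric] assms(1-6) by (simp add: ev_pm1)
  have "ev (UNIV - b) (pm a b) = 1" using assms(1-6) by (auto simp add: ev_pm1)
  then have 3: "b' \<subseteq> b" using e[of "UNIV - b"] assms(1-6) by (auto simp add: ev_pm1)
  have "ev (UNIV - b') (pm a' b') = 1" using assms(1-6) by (auto simp add: ev_pm1)
  then have 4: "b \<subseteq> b'" using e[of "UNIV - b'", symmetric] assms(1-6) by (auto simp add: ev_pm1)
  show ?thesis using 1 2 3 4 by blast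
qed

lemma vars_add: "vars (p + q) \<subseteq> vars p \<union> vars q"
  unfolding vars_def using keys_add[of p q] by blast

lemma vars_diff: "vars (p - q) \<subseteq> vars p \<union> vars q"
proof -
  have "Poly_Mapping.keys (p - q) \<subseteq> Poly_Mapping.keys p \<union> Poly_Mapping.keys q"
    by (auto simp: in_keys_iff lookup_minus)
  then show ?thesis unfolding vars_def by blast
qed

lemma vars_mult: "vars (p * q) \<subseteq> vars p \<union> vars q"
proof -
  have "Poly_Mapping.keys (p * q) \<subseteq> {a + b | a b. a \<in> Poly_Mapping.keys p \<and> b \<in> Poly_Mapping.keys q}"
    by (rule keys_mult)
  show ?thesis unfolding vars_def
  proof
    fix x assume "x \<in> \<Union> (Poly_Mapping.keys ` Poly_Mapping.keys (p * q))"
    then obtain k where k: "k \<in> Poly_Mapping.keys (p * q)" "x \<in> Poly_Mapping.keys k" by blast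
    with \<open>Poly_Mapping.keys (p * q) \<subseteq> _\<close> obtain a b where "k = a + b" "a \<in> Poly_Mapping.keys p" "b \<in> Poly_Mapping.keys q" by blast
    with k show "x \<in> \<Union> (Poly_Mapping.keys ` Poly_Mapping.keys p) \<union> \<Union> (Poly_Mapping.keys ` Poly_Mapping.keys q)"
      by (auto simp: keys_add_nat)
  qed
qed

lemma vars_one: "vars 1 = {}"
  by (simp add: vars_def)

lemma vars_zero: "vars 0 = {}"
  by (simp add: vars_def)

lemma vars_X: "vars (X i) = {i}"
  by (simp add: vars_def X_def)

lemma in_ring_mult: "in_ring m p \<Longrightarrow> in_ring m q \<Longrightarrow> in_ring m (p * q)"
  unfolding in_ring_def using vars_mult by blast

lemma in_ring_diff: "in_ring m p \<Longrightarrow> in_ring m q \<Longrightarrow> in_ring m (p - q)"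
  unfolding in_ring_def using vars_diff by blast

lemma in_ring_one: "in_ring m 1"
  by (simp add: in_ring_def vars_one)

lemma in_ring_zero: "in_ring m 0"
  by (simp add: in_ring_def vars_zero)

lemma in_ring_X: "i \<in> {1..m} \<Longrightarrow> in_ring m (X i)"
  by (simp add: in_ring_def vars_X)

lemma in_ring_prod: "(\<And>x. x \<in> A \<Longrightarrow> in_ring m (f x)) \<Longrightarrow> in_ring m (prod f A)"
  by (induction A rule: infinite_finite_induct) (auto simp: in_ring_one in_ring_mult)

lemma in_ring_pm: "a \<subseteq> {1..m} \<Longrightarrow> b \<subseteq> {1..m} \<Longrightarrow> in_ring m (pm a b)"
  unfolding pm_def
  by (intro in_ring_mult in_ring_prod in_ring_diff in_ring_one in_ring_X) auto

lemma pm_mult: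
  assumes "finite a" "finite b" "a' \<subseteq> a" "b' \<subseteq> b"
  shows "pm a b = pm a' b' * pm (a - a') (b - b')"
proof -
  have "prod X a = prod X a' * prod X (a - a')"
    using assms by (metis mult.commute prod.subset_diff)
  moreover have "(\<Prod>j\<in>b. 1 - X j) = (\<Prod>j\<in>b'. 1 - X j) * (\<Prod>j\<in>b - b'. 1 - X j)"
    using assms by (metis mult.commute prod.subset_diff)
  ultimately show ?thesis unfolding pm_def by (simp add: ac_simps)
qed

lemma dvd_pm:
  assumes "a \<subseteq> {1..m}" "b \<subseteq> {1..m}" "a' \<subseteq> {1..m}" "b' \<subseteq> {1..m}" "a \<inter> b = {}"
  shows "dvd_in m (pm a' b') (pm a b) \<longleftrightarrow> a' \<subseteq> a \<and> b' \<subseteq> b"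
proof
  have fin: "finite a" "finite b" "finite a'" "finite b'"
    using assms finite_subset by blast+
  assume "dvd_in m (pm a' b') (pm a b)"
  then obtain q where q: "pm a b = pm a' b' * q" unfolding dvd_in_def by blast
  have e: "ev c (pm a b) = 1 \<Longrightarrow> ev c (pm a' b') = 1" for c
    using q by (simp add: ev_mult)
  have "ev a (pm a b) = 1" using assms fin by (simp add: ev_pm1 Int_commute)
  then have "a' \<subseteq> a" using e[of a] assms fin by (simp add: ev_pm1)
  moreover have "ev (UNIV - b) (pm a b) = 1" using assms fin by (auto simp add: ev_pm1)
  then have "b' \<subseteq> b" using e[of "UNIV - b"] assms fin by (auto simp add: ev_pm1)
  ultimately show "a' \<subseteq> a \<and> b' \<subseteq> b" by blast
next
  assume "a' \<subseteq> a \<and> b' \<subseteq> b"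
  moreover have "finite a" "finite b" using assms finite_subset by blast+
  ultimately show "dvd_in m (pm a' b') (pm a b)"
    unfolding dvd_in_def using pm_mult in_ring_pm assms
    by (metis Diff_subset order_trans)
qed

definition hit :: "nat set set \<Rightarrow> nat set \<Rightarrow> nat set \<Rightarrow> bool" where
  "hit D a b \<longleftrightarrow> (\<exists>c\<in>D. a \<subseteq> c \<and> b \<inter> c = {})"

lemma ev_rho:
  assumes "g \<subseteq> {1..m}" "c \<subseteq> {1..m}"
  shows "ev c (rho m g) = (if g = c then 1 else 0)"
  using assms by (auto simp: rho_def ev_pm finite_subset)

lemma rho_inj: "inj_on (rho m) (Pow {1..m})"
proof (rule inj_onI)
  fix g g' assume "g \<in> Pow {1..m}" "g' \<in> Pow {1..m}" "rho m g = rho m g'"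
  then have "ev g (rho m g) = ev g (rho m g')" by simp
  with \<open>g \<in> Pow {1..m}\<close> \<open>g' \<in> Pow {1..m}\<close> show "g = g'"
    by (simp add: ev_rho split: if_splits)
qed

lemma pm_expand:
  assumes "a \<subseteq> {1..m}" "b \<subseteq> {1..m}" "a \<inter> b = {}"
  shows "pm a b = (\<Sum>g\<in>{g. g \<subseteq> {1..m} \<and> a \<subseteq> g \<and> b \<inter> g = {}}. rho m g)"
proof -
  define F where "F = {1..m} - a - b"
  have finF: "finite F" by (simp add: F_def)
  have fa: "finite a" "finite b" using assms finite_subset by blast+
  have "(\<Prod>x\<in>F. X x + (1 - X x)) = (1::poly2)" by simp
  then have one: "(\<Sum>T\<in>Pow F. (\<Prod>x\<in>T. X x) * (\<Prod>x\<in>F-T. 1 - X x)) = (1::poly2)"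
    using prod_add[OF finF, of X "\<lambda>x. 1 - X x"] by simp
  have "pm a b = pm a b * (\<Sum>T\<in>Pow F. (\<Prod>x\<in>T. X x) * (\<Prod>x\<in>F-T. 1 - X x))"
    using one by simp
  also have "\<dots> = (\<Sum>T\<in>Pow F. pm (a \<union> T) (b \<union> (F - T)))"
    unfolding sum_distrib_left
  proof (rule sum.cong[OF refl])
    fix T assume T: "T \<in> Pow F"
    have d1: "a \<inter> T = {}" and d2: "b \<inter> (F - T) = {}" using T by (auto simp: F_def)
    have fT: "finite T" "finite (F - T)" using T finF finite_subset by auto
    show "pm a b * ((\<Prod>x\<in>T. X x) * (\<Prod>x\<in>F-T. 1 - X x)) = pm (a \<union> T) (b \<union> (F - T))"
      unfolding pm_def using d1 d2 fT fa by (simp add: prod.union_disjoint ac_simps)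
  qed
  also have "\<dots> = (\<Sum>T\<in>Pow F. rho m (a \<union> T))"
  proof (rule sum.cong[OF refl])
    fix T assume T: "T \<in> Pow F"
    then have "b \<union> (F - T) = {1..m} - (a \<union> T)" using assms by (auto simp: F_def)
    then show "pm (a \<union> T) (b \<union> (F - T)) = rho m (a \<union> T)" by (simp add: rho_def)
  qed
  also have "\<dots> = (\<Sum>g\<in>(\<lambda>T. a \<union> T) ` Pow F. rho m g)"
  proof -
    have "inj_on (\<lambda>T. a \<union> T) (Pow F)"
      by (rule inj_onI) (auto simp: F_def)
    then show ?thesis by (simp add: sum.reindex)
  qed
  also have "(\<lambda>T. a \<union> T) ` Pow F = {g. g \<subseteq> {1..m} \<and> a \<subseteq> g \<and> b \<inter> g = {}}"
  proof
    show "(\<lambda>T. a \<union> T) ` Pow F \<subseteq> {g. g \<subseteq> {1..m} \<and> a \<subseteq> g \<and> b \<inter> g = {}}"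
      using assms by (auto simp: F_def)
    show "{g. g \<subseteq> {1..m} \<and> a \<subseteq> g \<and> b \<inter> g = {}} \<subseteq> (\<lambda>T. a \<union> T) ` Pow F"
    proof
      fix g assume g: "g \<in> {g. g \<subseteq> {1..m} \<and> a \<subseteq> g \<and> b \<inter> g = {}}"
      then have "g = a \<union> (g - a)" "g - a \<in> Pow F" by (auto simp: F_def)
      then show "g \<in> (\<lambda>T. a \<union> T) ` Pow F" by blast
    qed
  qed
  finally show ?thesis .
qed

lemma J_pm:
  assumes D: "D \<subseteq> Pow {1..m}" and ab: "a \<subseteq> {1..m}" "b \<subseteq> {1..m}" "a \<inter> b = {}"
  shows "pm a b \<in> J m D \<longleftrightarrow> \<not> hit D a b"
proof
  let ?G = "rho m ` {g. g \<subseteq> {1..m} \<and> g \<notin> D}"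
  assume "pm a b \<in> J m D"
  then obtain q where q: "pm a b = (\<Sum>g\<in>?G. q g * g)"
    unfolding J_def ideal_gen_def by blast
  show "\<not> hit D a b"
  proof
    assume "hit D a b"
    then obtain c where c: "c \<in> D" "a \<subseteq> c" "b \<inter> c = {}" unfolding hit_def by blast
    have cm: "c \<subseteq> {1..m}" using c D by blast
    have "ev c (pm a b) = 1" using c ab by (simp add: ev_pm finite_subset)
    moreover have "ev c (\<Sum>g\<in>?G. q g * g) = 0"
      unfolding ev_sum
    proof (rule sum.neutral, rule ballI)
      fix g assume "g \<in> ?G"
      then obtain h where h: "g = rho m h" "h \<subseteq> {1..m}" "h \<notin> D" by blast
      then have "h \<noteq> c" using c by blast
      then show "ev c (q g * g) = 0" using h cm by (simp add: ev_mult ev_rho)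
    qed
    ultimately show False using q by simp
  qed
next
  let ?S = "{g. g \<subseteq> {1..m} \<and> a \<subseteq> g \<and> b \<inter> g = {}}"
  let ?G = "rho m ` {g. g \<subseteq> {1..m} \<and> g \<notin> D}"
  assume nh: "\<not> hit D a b"
  have SG: "?S \<subseteq> {g. g \<subseteq> {1..m} \<and> g \<notin> D}" using nh unfolding hit_def by blast
  define q where "q g = (if g \<in> rho m ` ?S then 1 else 0 :: poly2)" for g
  have finG: "finite ?G" by simp
  have "(\<Sum>g\<in>?G. q g * g) = (\<Sum>g\<in>rho m ` ?S. g)"
  proof -
    have "(\<Sum>g\<in>?G. q g * g) = (\<Sum>g\<in>?G. if g \<in> rho m ` ?S then g else 0)"
      by (rule sum.cong) (auto simp: q_def)
    also have "\<dots> = (\<Sum>g\<in>?G \<inter> rho m ` ?S. g)"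
      using finG by (simp add: sum.inter_restrict)
    also have "?G \<inter> rho m ` ?S = rho m ` ?S" using SG by blast
    finally show ?thesis .
  qed
  also have "\<dots> = (\<Sum>g\<in>?S. rho m g)"
    by (rule sum.reindex_cong[OF inj_on_subset[OF rho_inj]]) auto
  also have "\<dots> = pm a b" using pm_expand[OF ab] by simp
  finally have "pm a b = (\<Sum>g\<in>?G. q g * g)" by simp
  moreover have "\<forall>g\<in>?G. in_ring m (q g)" by (simp add: q_def in_ring_one in_ring_zero)
  ultimately show "pm a b \<in> J m D" unfolding J_def ideal_gen_def by blast
qed



definition mincf :: "nat \<Rightarrow> nat set set \<Rightarrow> nat set \<Rightarrow> nat set \<Rightarrow> bool" where
  "mincf m D a b \<longleftrightarrow> a \<subseteq> {1..m} \<and> b \<subseteq> {1..m} \<and> a \<inter> b = {} \<and> \<not> hit D a b \<and>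
     (\<forall>a' b'. a' \<subseteq> a \<longrightarrow> b' \<subseteq> b \<longrightarrow> (a', b') \<noteq> (a, b) \<longrightarrow> hit D a' b')"

lemma pm_finite_inj:
  assumes "a \<subseteq> {1..m}" "b \<subseteq> {1..m}" "a \<inter> b = {}" "a' \<subseteq> {1..m'}" "b' \<subseteq> {1..m'}" "a' \<inter> b' = {}"
    "pm a b = pm a' b'"
  shows "a = a' \<and> b = b'"
proof -
  have "finite a" "finite b" "finite a'" "finite b'"
    using assms(1,2,4,5) by (auto intro: finite_subset[OF _ finite_atLeastAtMost])
  then show ?thesis using pm_inj assms(3,6,7) by blast
qed


lemma CF_char:
  assumes D: "D \<subseteq> Pow {1..m}"
  shows "f \<in> CF m D \<longleftrightarrow> (\<exists>a b. f = pm a b \<and> mincf m D a b)"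
proof
  assume f: "f \<in> CF m D"
  then obtain a b where ab: "a \<subseteq> {1..m}" "b \<subseteq> {1..m}" "a \<inter> b = {}" "f = pm a b"
    unfolding CF_def is_pseudo_monomial_def by blast
  have nh: "\<not> hit D a b" using f ab J_pm[OF D ab(1-3)] unfolding CF_def by blast
  have "hit D a' b'" if s: "a' \<subseteq> a" "b' \<subseteq> b" "(a', b') \<noteq> (a, b)" for a' b'
  proof (rule ccontr)
    assume "\<not> hit D a' b'"
    have s2: "a' \<subseteq> {1..m}" "b' \<subseteq> {1..m}" "a' \<inter> b' = {}" using s ab by auto
    then have "pm a' b' \<in> J m D" using J_pm[OF D s2] \<open>\<not> hit D a' b'\<close> by blast
    moreover have "is_pseudo_monomial m (pm a' b')" using s2 unfolding is_pseudo_monomial_def by blast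
    moreover have "dvd_in m (pm a' b') f" using dvd_pm[OF ab(1-2) s2(1-2) ab(3)] s ab by simp
    moreover have "pm a' b' \<noteq> f"
    proof
      assume "pm a' b' = f"
      then have "a' = a \<and> b' = b"
        using pm_finite_inj[OF s2(1-3) ab(1-3)] ab(4) by blast
      then show False using s by simp
    qed
    ultimately show False using f unfolding CF_def by blast
  qed
  then show "\<exists>a b. f = pm a b \<and> mincf m D a b"
    using ab nh unfolding mincf_def by blast
next
  assume "\<exists>a b. f = pm a b \<and> mincf m D a b"
  then obtain a b where f: "f = pm a b" and mc: "mincf m D a b" by blast
  have ab: "a \<subseteq> {1..m}" "b \<subseteq> {1..m}" "a \<inter> b = {}" using mc unfolding mincf_def by auto
  have inJ: "f \<in> J m D" using J_pm[OF D ab] mc f unfolding mincf_def by blast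
  have ps: "is_pseudo_monomial m f" using ab f unfolding is_pseudo_monomial_def by blast
  have "\<not> (is_pseudo_monomial m g \<and> g \<in> J m D \<and> dvd_in m g f \<and> g \<noteq> f)" for g
  proof
    assume g: "is_pseudo_monomial m g \<and> g \<in> J m D \<and> dvd_in m g f \<and> g \<noteq> f"
    then obtain a' b' where s2: "a' \<subseteq> {1..m}" "b' \<subseteq> {1..m}" "a' \<inter> b' = {}" "g = pm a' b'"
      unfolding is_pseudo_monomial_def by blast
    have sub: "a' \<subseteq> a" "b' \<subseteq> b" using g s2 f dvd_pm[OF ab(1-2) s2(1-2) ab(3)] by auto
    have "(a', b') \<noteq> (a, b)" using g s2 f by auto
    then have "hit D a' b'" using mc sub unfolding mincf_def by blast
    moreover have "\<not> hit D a' b'" using J_pm[OF D s2(1-3)] g s2 by blast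
    ultimately show False by blast
  qed
  then show "f \<in> CF m D" using inJ ps unfolding CF_def by blast
qed

lemma hit_mono: "hit D a b \<Longrightarrow> a' \<subseteq> a \<Longrightarrow> b' \<subseteq> b \<Longrightarrow> hit D a' b'"
  unfolding hit_def by (metis Int_mono order_trans subset_empty subset_refl)




lemma pm_two: "n \<noteq> i \<Longrightarrow> X n * X i = pm {n, i} {}"
  by (simp add: pm_def)

lemma pm_one_one: "X n * (1 - X j) = pm {n} {j}"
  by (simp add: pm_def)

theorem lemma2p2:
  fixes C :: "nat set set" and n k :: nat and \<sigma> \<tau> :: "nat set"
  assumes "n \<ge> 1"
    and "is_code n C"
    and "is_piercing C n k \<sigma> \<tau>"
  defines "A \<equiv> CF (n-1) (del_neuron C n)"
    and "B1 \<equiv> (\<lambda>i. X n * X i) ` ({1..n-1} - \<tau>)"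
    and "B2 \<equiv> (\<lambda>j. X n * (1 - X j)) ` \<sigma>"
  shows "CF n C = A \<union> B1 \<union> B2 \<and> A \<inter> B1 = {} \<and> A \<inter> B2 = {} \<and> B1 \<inter> B2 = {}"
proof -
  define D where "D = del_neuron C n"
  define I where "I = interval \<sigma> \<tau>"
  have Cp: "C \<subseteq> Pow {1..n}" and e: "{} \<in> C" and cov: "\<And>i. i \<in> {1..n} \<Longrightarrow> \<exists>c\<in>C. i \<in> c"
    using assms(2) unfolding is_code_def by blast+
  have st: "\<sigma> \<subseteq> \<tau>" and tn: "\<tau> \<subseteq> {1..n-1}" and ID: "I \<subseteq> D" and Ceq: "C = D \<union> insert n ` I"
    using assms(3) unfolding is_piercing_def D_def I_def by blast+
  have Cx0: "x \<in> {1..n}" if "c \<in> C" "x \<in> c" for c x using Cp that by blast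
  have Cx: "\<And>c x. c \<in> C \<Longrightarrow> x \<in> c \<Longrightarrow> 1 \<le> x \<and> x \<le> n" using Cx0 by (meson atLeastAtMost_iff)
  have Dsub: "D \<subseteq> Pow {1..n-1}" unfolding D_def del_neuron_def
  proof
    fix d assume "d \<in> (\<lambda>c. c - {n}) ` C"
    then obtain c where "c \<in> C" "d = c - {n}" by blast
    then show "d \<in> Pow {1..n-1}" using Cx[of c] by fastforce
  qed
  have nD: "\<And>d. d \<in> D \<Longrightarrow> n \<notin> d" unfolding D_def del_neuron_def by auto
  have DC: "D \<subseteq> C" using Ceq by blast
  have CD: "\<And>c. c \<in> C \<Longrightarrow> c \<in> D \<or> (\<exists>g\<in>I. c = insert n g)" using Ceq by blast
  have Ii: "\<And>g. g \<in> I \<longleftrightarrow> \<sigma> \<subseteq> g \<and> g \<subseteq> \<tau>" unfolding I_def interval_def by blast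
  have nn: "{1..n-1} \<subseteq> {1..n}" by auto
  have n1: "n \<in> {1..n}" "n \<notin> {1..n-1}" using assms(1) by auto

  have hitC_d: "hit C a b \<longleftrightarrow> hit D a b" if na0: "n \<notin> a" for a b
  proof
    assume "hit C a b"
    then obtain c where c: "c \<in> C" "a \<subseteq> c" "b \<inter> c = {}" unfolding hit_def by blast
    from CD[OF c(1)] show "hit D a b"
    proof
      assume "c \<in> D" then show ?thesis using c unfolding hit_def by blast
    next
      assume "\<exists>g\<in>I. c = insert n g"
      then obtain g where "g \<in> I" "c = insert n g" by blast
      then show ?thesis using c ID na0 unfolding hit_def by blast
    qed
  next
    assume "hit D a b" then show "hit C a b" using DC unfolding hit_def by blast
  qed

  have hitC_b: "hit C a b" if na1: "n \<notin> a" and hb1: "hit C a (b - {n})" for a b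
  proof -
    obtain c where c: "c \<in> C" "a \<subseteq> c" "(b - {n}) \<inter> c = {}" using hb1 unfolding hit_def by blast
    from CD[OF c(1)] show ?thesis
    proof
      assume "c \<in> D" then have "n \<notin> c" by (rule nD)
      then show ?thesis using c unfolding hit_def by blast
    next
      assume "\<exists>g\<in>I. c = insert n g"
      then obtain g where g: "g \<in> I" "c = insert n g" by blast
      then have "g \<in> C" "n \<notin> g" using ID DC nD by blast+
      then show ?thesis using c g na1 unfolding hit_def by blast
    qed
  qed

  have hitC_a: "hit C a b \<longleftrightarrow> (a - {n} \<subseteq> \<tau> \<and> b \<inter> \<sigma> = {})" if na2: "n \<in> a" and ab2: "a \<inter> b = {}" for a b
  proof
    assume "hit C a b"
    then obtain c where c: "c \<in> C" "a \<subseteq> c" "b \<inter> c = {}" unfolding hit_def by blast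
    have "c \<notin> D" using c na2 nD by blast
    then obtain g where "g \<in> I" "c = insert n g" using CD[OF c(1)] by blast
    then show "a - {n} \<subseteq> \<tau> \<and> b \<inter> \<sigma> = {}" using c Ii by blast
  next
    assume h: "a - {n} \<subseteq> \<tau> \<and> b \<inter> \<sigma> = {}"
    define g where "g = \<sigma> \<union> (a - {n})"
    have "g \<in> I" using Ii h st unfolding g_def by blast
    then have "insert n g \<in> C" using Ceq by blast
    moreover have "a \<subseteq> insert n g" unfolding g_def by blast
    moreover have "b \<inter> insert n g = {}" using h na2 ab2 unfolding g_def by blast
    ultimately show "hit C a b" unfolding hit_def by blast
  qed

  have hn: "hit C {n} {}" using hitC_a[of "{n}" "{}"] by simp
  have he: "hit C {} {j}" for j using e unfolding hit_def by blast

  have CFC: "f \<in> CF n C \<longleftrightarrow> (\<exists>a b. f = pm a b \<and> mincf n C a b)" for f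
    using CF_char[OF Cp] .
  have CFD: "f \<in> A \<longleftrightarrow> (\<exists>a b. f = pm a b \<and> mincf (n-1) D a b)" for f
    using CF_char[OF Dsub] unfolding A_def D_def .

  have sub1: "CF n C \<subseteq> A \<union> B1 \<union> B2"
  proof
    fix f assume "f \<in> CF n C"
    then obtain a b where f: "f = pm a b" and mc: "mincf n C a b" using CFC by blast
    have ab: "a \<subseteq> {1..n}" "b \<subseteq> {1..n}" "a \<inter> b = {}" and nh: "\<not> hit C a b"
      and mn: "\<And>a' b'. a' \<subseteq> a \<Longrightarrow> b' \<subseteq> b \<Longrightarrow> (a', b') \<noteq> (a, b) \<Longrightarrow> hit C a' b'"
      using mc unfolding mincf_def by blast+
    consider "n \<in> b" | "n \<in> a" | "n \<notin> a" "n \<notin> b" by blast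
    then show "f \<in> A \<union> B1 \<union> B2"
    proof cases
      case 1
      then have "n \<notin> a" using ab by blast
      have "hit C a (b - {n})" using mn[of a "b - {n}"] 1 by blast
      then have False using hitC_b \<open>n \<notin> a\<close> nh by blast
      then show ?thesis ..
    next
      case 2
      have "\<not> (a - {n} \<subseteq> \<tau> \<and> b \<inter> \<sigma> = {})" using hitC_a[OF 2 ab(3)] nh by blast
      then consider i where "i \<in> a" "i \<noteq> n" "i \<notin> \<tau>" | j where "j \<in> b" "j \<in> \<sigma>" by blast
      then show ?thesis
      proof cases
        case 1
        have "i \<in> {1..n}" using 1 ab by blast
        then have i: "i \<in> {1..n-1}" using 1 by auto
        have "\<not> hit C {n, i} {}" using hitC_a[of "{n, i}" "{}"] 1 by auto
        then have "({n, i}, {}) = (a, b)" using mn[of "{n, i}" "{}"] 1 2 by blast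
        then have "f = X n * X i" using f pm_two 1 by simp
        then show ?thesis using i 1 unfolding B1_def by blast
      next
        case 3: 2
        have jn: "j \<noteq> n" using 3 st tn n1 by blast
        have "\<not> hit C {n} {j}" using hitC_a[of "{n}" "{j}"] 3 jn by auto
        then have "({n}, {j}) = (a, b)" using mn[of "{n}" "{j}"] 2 3 by blast
        then have "f = X n * (1 - X j)" using f pm_one_one by simp
        then show ?thesis using 3 unfolding B2_def by blast
      qed
    next
      case 3
      have nn2: "{1..n} - {n} \<subseteq> {1..n-1}" by auto
      have ab': "a \<subseteq> {1..n-1}" "b \<subseteq> {1..n-1}" using ab 3 nn2 by blast+
      have "mincf (n-1) D a b"
        unfolding mincf_def
      proof (intro conjI allI impI)
        show "\<not> hit D a b" using nh hitC_d 3 by blast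
        fix a' b' assume "a' \<subseteq> a" "b' \<subseteq> b" "(a', b') \<noteq> (a, b)"
        then have "hit C a' b'" using mn by blast
        then show "hit D a' b'" using hitC_d \<open>a' \<subseteq> a\<close> 3 by blast
      qed (use ab ab' in blast)+
      then show ?thesis using CFD f by blast
    qed
  qed

  have sub2: "A \<union> B1 \<union> B2 \<subseteq> CF n C"
  proof
    fix f assume "f \<in> A \<union> B1 \<union> B2"
    then consider "f \<in> A" | "f \<in> B1" | "f \<in> B2" by blast
    then show "f \<in> CF n C"
    proof cases
      case 1
      then obtain a b where f: "f = pm a b" and mc: "mincf (n-1) D a b" using CFD by blast
      have ab: "a \<subseteq> {1..n-1}" "b \<subseteq> {1..n-1}" "a \<inter> b = {}" and nh: "\<not> hit D a b"
        and mn: "\<And>a' b'. a' \<subseteq> a \<Longrightarrow> b' \<subseteq> b \<Longrightarrow> (a', b') \<noteq> (a, b) \<Longrightarrow> hit D a' b'"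
        using mc unfolding mincf_def by blast+
      have na: "n \<notin> a" using ab n1 by blast
      have "mincf n C a b"
        unfolding mincf_def
      proof (intro conjI allI impI)
        show "\<not> hit C a b" using nh hitC_d na by blast
        fix a' b' assume "a' \<subseteq> a" "b' \<subseteq> b" "(a', b') \<noteq> (a, b)"
        then have "hit D a' b'" using mn by blast
        then show "hit C a' b'" using hitC_d \<open>a' \<subseteq> a\<close> na by blast
      qed (use ab nn in blast)+
      then show ?thesis using CFC f by blast
    next
      case 2
      then obtain i where i: "i \<in> {1..n-1}" "i \<notin> \<tau>" and f: "f = X n * X i" unfolding B1_def by blast
      have ni: "n \<noteq> i" using i n1 by blast
      have "mincf n C {n, i} {}"
        unfolding mincf_def
      proof (intro conjI allI impI)
        show "\<not> hit C {n, i} {}" using hitC_a[of "{n, i}" "{}"] i ni by auto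
        fix a' b' :: "nat set" assume s: "a' \<subseteq> {n, i}" "b' \<subseteq> {}" "(a', b') \<noteq> ({n, i}, {})"
        then have "a' \<subseteq> {n} \<or> a' \<subseteq> {i}" by blast
        moreover have "hit C {i} {}" using cov[of i] i unfolding hit_def by auto
        ultimately show "hit C a' b'" using hn hit_mono s(2) by blast
      qed (use i n1 in auto)
      then show ?thesis using CFC f pm_two[OF ni] by blast
    next
      case 3
      then obtain j where j: "j \<in> \<sigma>" and f: "f = X n * (1 - X j)" unfolding B2_def by blast
      have jn: "j \<noteq> n" "j \<in> {1..n}" using j st tn n1 by auto
      have "mincf n C {n} {j}"
        unfolding mincf_def
      proof (intro conjI allI impI)
        show "\<not> hit C {n} {j}" using hitC_a[of "{n}" "{j}"] j jn by auto
        fix a' b' :: "nat set" assume s: "a' \<subseteq> {n}" "b' \<subseteq> {j}" "(a', b') \<noteq> ({n}, {j})"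
        then have "b' = {} \<or> a' = {}" by blast
        then show "hit C a' b'"
        proof
          assume "b' = {}" then show ?thesis using hn hit_mono s(1) by blast
        next
          assume "a' = {}" then show ?thesis using he[of j] hit_mono s(2) by blast
        qed
      qed (use jn n1 in auto)
      then show ?thesis using CFC f pm_one_one by metis
    qed
  qed

  have d1: "A \<inter> B1 = {}"
  proof (rule ccontr)
    assume "A \<inter> B1 \<noteq> {}"
    then obtain f where "f \<in> A" "f \<in> B1" by blast
    then obtain a b i where f: "f = pm a b" "mincf (n-1) D a b" and i: "i \<in> {1..n-1}" "f = X n * X i"
      using CFD unfolding B1_def by blast
    have ni: "n \<noteq> i" using i n1 by blast
    have ab: "a \<subseteq> {1..n-1}" "b \<subseteq> {1..n-1}" "a \<inter> b = {}" using f unfolding mincf_def by blast+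
    have "a = {n, i}" using pm_finite_inj[OF ab, where a'="{n, i}" and b'="{}" and m'=n] f i pm_two[OF ni] i n1 by auto
    then show False using ab n1 by blast
  qed
  have d2: "A \<inter> B2 = {}"
  proof (rule ccontr)
    assume "A \<inter> B2 \<noteq> {}"
    then obtain f where "f \<in> A" "f \<in> B2" by blast
    then obtain a b j where f: "f = pm a b" "mincf (n-1) D a b" and j: "j \<in> \<sigma>" "f = X n * (1 - X j)"
      using CFD unfolding B2_def by blast
    have jn: "j \<noteq> n" "j \<in> {1..n}" using j st tn n1 by auto
    have ab: "a \<subseteq> {1..n-1}" "b \<subseteq> {1..n-1}" "a \<inter> b = {}" using f unfolding mincf_def by blast+
    have "a = {n}" using pm_finite_inj[OF ab, where a'="{n}" and b'="{j}" and m'=n] f j pm_one_one jn n1 by auto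
    then show False using ab n1 by blast
  qed
  have d3: "B1 \<inter> B2 = {}"
  proof (rule ccontr)
    assume "B1 \<inter> B2 \<noteq> {}"
    then obtain i j where i: "i \<in> {1..n-1}" and j: "j \<in> \<sigma>" and eq: "X n * X i = X n * (1 - X j)"
      unfolding B1_def B2_def by blast
    have ni: "n \<noteq> i" using i n1 by blast
    have jn: "j \<noteq> n" "j \<in> {1..n}" using j st tn n1 by auto
    have "{} = {j}" using pm_finite_inj[where a="{n, i}" and m=n and b="{}" and a'="{n}" and m'=n and b'="{j}"] eq pm_two[OF ni] pm_one_one i jn n1 by auto
    then show False by blast
  qed
  show ?thesis using sub1 sub2 d1 d2 d3 by blast
qed


end
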